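(* Let $m\in\mathbb{N}$ and let $\lambda$ be a nonzero real number. For all integers $n,l\ge0$, \[ D_{m,\lambda}(n+l,x)=\sum_{j=0}^{l}\sum_{k=0}^{n}\binom{n}{k}W_{m,\lambda}(l,j)\,x^{j}\,(mj-l\lambda)_{n-k,\lambda}\,D_{m,\lambda}(k,x) \] as polynomials in $x$; equivalently, with $a^{+}$ the boson creation operator, \[ D_{m,\lambda}(n+l,m a^{+})=\sum_{j=0}^{l}\sum_{k=0}^{n}\binom{n}{k}W_{m,\lambda}(l,j)\,m^{j}(a^{+})^{j}(mj-l\lambda)_{n-k,\lambda}D_{m,\lambda}(k,m a^{+}). \]
   Context: $(x)_{0,\lambda}=1$ and $(x)_{n,\lambda}=x(x-\lambda)\cdots(x-(n-1)\lambda)$ for $n\ge1$; $(x)_k=x(x-1)\cdots(x-k+1)$. For $m\in\mathbb{N}$, the degenerate Whitney numbers of the second kind $W_{m,\lambda}(n,k)$ are defined by $(mx+1)_{n,\lambda}=\sum_{k=0}^{n}W_{m,\lambda}(n,k)m^{k}(x)_k$ ($n\ge0$), and the degenerate Dowling polynomials are $D_{m,\lambda}(n,x)=\sum_{k=0}^{n}W_{m,\lambda}(n,k)x^{k}$. *)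

theory Defs
  imports Complex_Main
begin

definition deg_ff :: "real \<Rightarrow> real \<Rightarrow> nat \<Rightarrow> real" where
  "deg_ff x lam n = (\<Prod>i<n. x - of_nat i * lam)"

definition falling_fact :: "real \<Rightarrow> nat \<Rightarrow> real" where
  "falling_fact x k = (\<Prod>i<k. x - of_nat i)"

definition deg_whitney2 :: "nat \<Rightarrow> real \<Rightarrow> nat \<Rightarrow> nat \<Rightarrow> real" where
  "deg_whitney2 m lam n =
     (THE c. (\<forall>x::real. deg_ff (of_nat m * x + 1) lam n
                 = (\<Sum>k\<le>n. c k * of_nat m ^ k * falling_fact x k))
            \<and> (\<forall>k>n. c k = 0))"

definition deg_dowling :: "nat \<Rightarrow> real \<Rightarrow> nat \<Rightarrow> real \<Rightarrow> real" where
  "deg_dowling m lam n x = (\<Sum>k\<le>n. deg_whitney2 m lam n k * x ^ k)"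

end

theory Submission
  imports Defs
begin

fun Wr :: "nat \<Rightarrow> real \<Rightarrow> nat \<Rightarrow> nat \<Rightarrow> real" where
  "Wr m lam 0 k = (if k = 0 then 1 else 0)"
| "Wr m lam (Suc n) k = (if k = 0 then 0 else Wr m lam n (k-1))
      + (of_nat m * of_nat k + 1 - of_nat n * lam) * Wr m lam n k"

lemma Wr_zero: "n < k \<Longrightarrow> Wr m lam n k = 0"
  by (induction n arbitrary: k) auto

lemma ff_Suc: "falling_fact x (Suc k) = falling_fact x k * (x - of_nat k)"
  by (simp add: falling_fact_def)

lemma dff_Suc: "deg_ff x lam (Suc k) = deg_ff x lam k * (x - of_nat k * lam)"
  by (simp add: deg_ff_def)

lemma Wr_expand:
  "deg_ff (of_nat m * x + 1) lam n = (\<Sum>k\<le>n. Wr m lam n k * of_nat m ^ k * falling_fact x k)"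
proof (induction n)
  case 0
  then show ?case by (simp add: deg_ff_def falling_fact_def)
next
  case (Suc n)
  let ?f = "\<lambda>k. Wr m lam n k * of_nat m ^ k * falling_fact x k"
  have "deg_ff (of_nat m * x + 1) lam (Suc n) = (\<Sum>k\<le>n. ?f k) * (of_nat m * x + 1 - of_nat n * lam)"
    using Suc by (simp add: dff_Suc)
  also have "\<dots> = (\<Sum>k\<le>n. Wr m lam n k * of_nat m ^ Suc k * falling_fact x (Suc k)
      + (of_nat m * of_nat k + 1 - of_nat n * lam) * ?f k)"
    unfolding sum_distrib_right by (rule sum.cong) (auto simp: ff_Suc algebra_simps)
  also have "\<dots> = (\<Sum>k\<le>n. Wr m lam n k * of_nat m ^ Suc k * falling_fact x (Suc k))
      + (\<Sum>k\<le>n. (of_nat m * of_nat k + 1 - of_nat n * lam) * ?f k)"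
    by (simp add: sum.distrib)
  also have "(\<Sum>k\<le>n. (of_nat m * of_nat k + 1 - of_nat n * lam) * ?f k)
     = (\<Sum>k\<le>Suc n. (of_nat m * of_nat k + 1 - of_nat n * lam) * ?f k)"
    by (simp add: Wr_zero)
  also have "(\<Sum>k\<le>n. Wr m lam n k * of_nat m ^ Suc k * falling_fact x (Suc k))
     = (\<Sum>k\<le>Suc n. (if k = 0 then 0 else Wr m lam n (k-1)) * of_nat m ^ k * falling_fact x k)"
    by (subst sum.atMost_Suc_shift) simp
  finally show ?case
    by (simp add: sum.distrib[symmetric] algebra_simps del: Wr.simps(1) sum.atMost_Suc)
qed

lemma ff_nat_zero: "i < k \<Longrightarrow> falling_fact (of_nat i) k = 0"
  unfolding falling_fact_def by (rule prod_zero) auto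

lemma ff_shift1: "falling_fact (y + 1) (Suc j) = (y + 1) * falling_fact y j"
  unfolding falling_fact_def prod.lessThan_Suc_shift by (simp add: algebra_simps)

lemma ff_nat_shift: "falling_fact (of_nat (i + j)) j * fact i = fact (i + j)"
proof (induction j arbitrary: i)
  case 0 then show ?case by (simp add: falling_fact_def)
next
  case (Suc j)
  have e1: "of_nat (i + Suc j) = (of_nat (i+j) :: real) + 1" by simp
  have "falling_fact (of_nat (i + Suc j)) (Suc j) = of_nat (i + Suc j) * falling_fact (of_nat (i + j)) j"
    unfolding e1 ff_shift1 ..
  then have "falling_fact (of_nat (i + Suc j)) (Suc j) * fact i = of_nat (i + Suc j) * (falling_fact (of_nat (i + j)) j * fact i)"
    by simp
  also have "\<dots> = fact (i + Suc j)" using Suc[of i] by (simp add: fact_Suc)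
  finally show ?case .
qed

lemma Wr_unique:
  assumes m: "m \<ge> 1"
    and eq: "\<forall>x::real. (\<Sum>k\<le>n. c k * of_nat m ^ k * falling_fact x k) = (\<Sum>k\<le>n. d k * of_nat m ^ k * falling_fact x k)"
    and c: "\<forall>k>n. c k = 0" and d: "\<forall>k>n. d k = 0"
  shows "c = d"
proof -
  define e where "e k = c k - d k" for k
  have E: "(\<Sum>k\<le>n. e k * of_nat m ^ k * falling_fact x k) = 0" for x
    using eq[rule_format, of x] by (simp add: e_def algebra_simps sum_subtractf)
  have "e i = 0" for i
  proof (induction i rule: less_induct)
    case (less i)
    show ?case
    proof (cases "i \<le> n")
      case False then show ?thesis using c d by (simp add: e_def)
    next
      case True
      have "(\<Sum>k\<le>n. e k * of_nat m ^ k * falling_fact (of_nat i) k) = e i * of_nat m ^ i * falling_fact (of_nat i) i"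
        apply (subst sum.remove[of _ i]) using True apply auto
        apply (rule sum.neutral)
      proof
        fix k assume k: "k \<in> {..n} - {i}"
        show "e k * of_nat m ^ k * falling_fact (of_nat i) k = 0"
        proof (cases "k < i")
          case True then show ?thesis using less by simp
        next
          case False then have "i < k" using k by auto
          then show ?thesis using ff_nat_zero by simp
        qed
      qed
      moreover have "falling_fact (of_nat i) i \<noteq> 0" using ff_nat_shift[of 0 i] by auto
      ultimately show ?thesis using E[of "of_nat i"] m by auto
    qed
  qed
  then show ?thesis by (auto simp: e_def fun_eq_iff)
qed

lemma whitney_eq: "m \<ge> 1 \<Longrightarrow> deg_whitney2 m lam n = Wr m lam n"
  unfolding deg_whitney2_def
  apply (rule the_equality)
   apply (auto simp: Wr_expand Wr_zero)[1]
  apply (rule Wr_unique[where m=m and n=n]) by (auto simp: Wr_expand Wr_zero)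

lemma dff_0 [simp]: "deg_ff x lam 0 = 1"
  by (simp add: deg_ff_def)

lemma dff_add: "deg_ff a lam (n + l) = deg_ff a lam l * deg_ff (a - of_nat l * lam) lam n"
  by (induction n) (auto simp: dff_Suc algebra_simps)

lemma choose_Suc_split: "(Suc n choose k) = (if k = 0 then 0 else n choose (k - 1)) + (n choose k)"
  by (cases k) auto

lemma dff_binomial:
  "deg_ff (a + b) lam n = (\<Sum>k\<le>n. of_nat (n choose k) * deg_ff a lam k * deg_ff b lam (n - k))"
proof (induction n)
  case 0 then show ?case by (simp add: deg_ff_def)
next
  case (Suc n)
  let ?A = "deg_ff a lam" and ?B = "deg_ff b lam"
  have "deg_ff (a + b) lam (Suc n) = (\<Sum>k\<le>n. of_nat (n choose k) * ?A k * ?B (n - k)) * (a + b - of_nat n * lam)"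
    using Suc by (simp add: dff_Suc)
  also have "\<dots> = (\<Sum>k\<le>n. of_nat (n choose k) * ?A (Suc k) * ?B (Suc n - Suc k))
        + (\<Sum>k\<le>n. of_nat (n choose k) * ?A k * ?B (Suc n - k))"
    unfolding sum_distrib_right sum.distrib[symmetric]
  proof (rule sum.cong[OF refl])
    fix k assume "k \<in> {..n}"
    then have k: "k \<le> n" by simp
    then have "Suc n - k = Suc (n - k)" by simp
    moreover have "of_nat (n - k) = (of_nat n - of_nat k :: real)" using k by (simp add: of_nat_diff)
    ultimately show "of_nat (n choose k) * ?A k * ?B (n - k) * (a + b - of_nat n * lam) =
      of_nat (n choose k) * ?A (Suc k) * ?B (Suc n - Suc k) + of_nat (n choose k) * ?A k * ?B (Suc n - k)"
      by (simp add: dff_Suc algebra_simps)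
  qed
  also have "(\<Sum>k\<le>n. of_nat (n choose k) * ?A (Suc k) * ?B (Suc n - Suc k))
     = (\<Sum>k\<le>Suc n. of_nat (if k = 0 then 0 else n choose (k - 1)) * ?A k * ?B (Suc n - k))"
    by (subst sum.atMost_Suc_shift) simp
  also have "(\<Sum>k\<le>n. of_nat (n choose k) * ?A k * ?B (Suc n - k))
     = (\<Sum>k\<le>Suc n. of_nat (n choose k) * ?A k * ?B (Suc n - k))"
    by simp
  finally show ?case
    unfolding choose_Suc_split of_nat_add distrib_right sum.distrib by simp
qed

lemma exp_real: "(\<lambda>i. z ^ i / fact i) sums exp (z::real)"
  using exp_converges[of z] by (simp add: divide_inverse_commute scaleR_conv_of_real)

lemma shift_sums:
  assumes "(\<lambda>i. g (i + j) * z ^ i / fact i) sums s"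
  shows "(\<lambda>i. falling_fact (of_nat i) j * g i * (z::real) ^ i / fact i) sums (z ^ j * s)"
proof -
  have "(\<lambda>i. falling_fact (of_nat (i + j)) j * g (i + j) * z ^ (i + j) / fact (i + j)) sums (z ^ j * s)"
  proof -
    have "falling_fact (of_nat (i + j)) j * g (i + j) * z ^ (i + j) / fact (i + j) = z ^ j * (g (i + j) * z ^ i / fact i)" for i
    proof -
      have "fact (i + j) = falling_fact (of_nat (i + j)) j * (fact i :: real)" using ff_nat_shift[of i j] by simp
      moreover have "(fact (i+j) :: real) \<noteq> 0" by simp
      ultimately have "falling_fact (of_nat (i + j)) j \<noteq> 0" by auto
      then show ?thesis using \<open>fact (i + j) = _\<close> by (simp add: power_add field_simps)
    qed
    then show ?thesis using sums_mult[OF assms, of "z ^ j"] by simp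
  qed
  then show ?thesis
    by (subst (asm) sums_zero_iff_shift) (auto simp: ff_nat_zero)
qed

lemma ff_exp: "(\<lambda>i. falling_fact (of_nat i) k * (z::real) ^ i / fact i) sums (z ^ k * exp z)"
  using shift_sums[of "\<lambda>_. 1" k z "exp z"] exp_real by simp

lemma D_series:
  assumes m: "m \<ge> 1"
  shows "(\<lambda>i. deg_ff (of_nat m * of_nat i + 1) lam n * (x / of_nat m) ^ i / fact i)
           sums (exp (x / of_nat m) * deg_dowling m lam n x)"
proof -
  define z where "z = x / of_nat m"
  have mz: "of_nat m * z = x" using m by (simp add: z_def)
  have "(\<lambda>i. \<Sum>k\<le>n. Wr m lam n k * of_nat m ^ k * (falling_fact (of_nat i) k * z ^ i / fact i))
      sums (\<Sum>k\<le>n. Wr m lam n k * of_nat m ^ k * (z ^ k * exp z))"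
    by (rule sums_sum) (rule sums_mult[OF ff_exp])
  moreover have "(\<Sum>k\<le>n. Wr m lam n k * of_nat m ^ k * (z ^ k * exp z)) = exp z * deg_dowling m lam n x"
    unfolding deg_dowling_def whitney_eq[OF m] sum_distrib_left
    by (rule sum.cong[OF refl]) (simp add: mz[symmetric] power_mult_distrib)
  moreover have "(\<Sum>k\<le>n. Wr m lam n k * of_nat m ^ k * (falling_fact (of_nat i) k * z ^ i / fact i))
      = deg_ff (of_nat m * of_nat i + 1) lam n * z ^ i / fact i" for i
    unfolding Wr_expand sum_distrib_right sum_divide_distrib
    by (rule sum.cong[OF refl]) simp
  ultimately show ?thesis by (simp add: z_def)
qed

theorem theorem3p1:
  fixes m n l :: nat and lam x :: real
  assumes "m \<ge> 1" and "lam \<noteq> 0"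
  shows "deg_dowling m lam (n + l) x =
    (\<Sum>j\<le>l. \<Sum>k\<le>n. of_nat (n choose k) * deg_whitney2 m lam l j * x ^ j
        * deg_ff (of_nat m * of_nat j - of_nat l * lam) lam (n - k)
        * deg_dowling m lam k x)"
proof -
  have m: "m \<ge> 1" by fact
  define z where "z = x / of_nat m"
  have mz: "of_nat m * z = x" using m by (simp add: z_def)
  define g where "g i = deg_ff (of_nat m * of_nat i + 1 - of_nat l * lam) lam n" for i :: nat
  define R where "R j = (\<Sum>k\<le>n. of_nat (n choose k) * deg_ff (of_nat m * of_nat j - of_nat l * lam) lam (n - k)
        * (exp z * deg_dowling m lam k x))" for j :: nat
  have inner: "(\<lambda>i. g (i + j) * z ^ i / fact i) sums R j" for j
  proof -
    have "(\<lambda>i. \<Sum>k\<le>n. of_nat (n choose k) * deg_ff (of_nat m * of_nat j - of_nat l * lam) lam (n - k)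
        * (deg_ff (of_nat m * of_nat i + 1) lam k * z ^ i / fact i)) sums R j"
      unfolding R_def by (rule sums_sum) (rule sums_mult, use D_series[OF m] in \<open>simp add: z_def\<close>)
    moreover have "g (i + j) * z ^ i / fact i = (\<Sum>k\<le>n. of_nat (n choose k) * deg_ff (of_nat m * of_nat j - of_nat l * lam) lam (n - k)
        * (deg_ff (of_nat m * of_nat i + 1) lam k * z ^ i / fact i))" for i
    proof -
      have "g (i + j) = deg_ff ((of_nat m * of_nat i + 1) + (of_nat m * of_nat j - of_nat l * lam)) lam n"
        unfolding g_def by (simp add: algebra_simps)
      also have "\<dots> = (\<Sum>k\<le>n. of_nat (n choose k) * deg_ff (of_nat m * of_nat i + 1) lam k
           * deg_ff (of_nat m * of_nat j - of_nat l * lam) lam (n - k))"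
        by (rule dff_binomial)
      finally have G: "g (i + j) = (\<Sum>k\<le>n. of_nat (n choose k) * deg_ff (of_nat m * of_nat i + 1) lam k
           * deg_ff (of_nat m * of_nat j - of_nat l * lam) lam (n - k))" .
      show ?thesis unfolding G sum_distrib_right sum_divide_distrib
        by (intro sum.cong refl) (simp add: algebra_simps)
    qed
    ultimately show ?thesis by simp
  qed
  have "(\<lambda>i. \<Sum>j\<le>l. Wr m lam l j * of_nat m ^ j * (falling_fact (of_nat i) j * g i * z ^ i / fact i))
      sums (\<Sum>j\<le>l. Wr m lam l j * of_nat m ^ j * (z ^ j * R j))"
    by (rule sums_sum) (rule sums_mult[OF shift_sums[OF inner]])
  moreover have "(\<Sum>j\<le>l. Wr m lam l j * of_nat m ^ j * (falling_fact (of_nat i) j * g i * z ^ i / fact i))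
      = deg_ff (of_nat m * of_nat i + 1) lam (n + l) * z ^ i / fact i" for i
    unfolding dff_add Wr_expand g_def sum_distrib_right sum_divide_distrib
    by (rule sum.cong[OF refl]) (simp add: algebra_simps)
  ultimately have "(\<lambda>i. deg_ff (of_nat m * of_nat i + 1) lam (n + l) * z ^ i / fact i)
      sums (\<Sum>j\<le>l. Wr m lam l j * of_nat m ^ j * (z ^ j * R j))" by simp
  then have "exp z * deg_dowling m lam (n + l) x = (\<Sum>j\<le>l. Wr m lam l j * of_nat m ^ j * (z ^ j * R j))"
    using D_series[OF m, of lam "n + l" x] unfolding z_def using sums_unique2 by blast
  also have "\<dots> = exp z * (\<Sum>j\<le>l. \<Sum>k\<le>n. of_nat (n choose k) * deg_whitney2 m lam l j * x ^ j
        * deg_ff (of_nat m * of_nat j - of_nat l * lam) lam (n - k)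
        * deg_dowling m lam k x)"
    unfolding R_def whitney_eq[OF m] sum_distrib_left
    by (intro sum.cong refl) (simp add: mz[symmetric] power_mult_distrib algebra_simps)
  finally show ?thesis by simp
qed

end
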